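(* An algebra $\mathbf{A}$ has a minority term if and only if it has a Maltsev term and a minority-majority term.
   Context: A ternary term $m(x,y,z)$ of an algebra $\mathbf{A}$ is a minority term if its interpretation on $A$ satisfies the identities $m(y,x,x)\approx m(x,y,x)\approx m(x,x,y)\approx y$. A ternary term $p(x,y,z)$ of $\mathbf{A}$ is a Maltsev term if $p(x,x,y)\approx p(y,x,x)\approx y$ holds in $\mathbf{A}$. A 6-ary term $t(x_1,\dots,x_6)$ of $\mathbf{A}$ is a minority-majority term if $\mathbf{A}$ satisfies $t(y,x,x,z,y,y)\approx y$, $t(x,y,x,y,z,y)\approx y$, and $t(x,x,y,y,y,z)\approx y$. *)

theory Defs
  imports Main
begin

text \<open>A (finitary) algebra is given by a nonempty carrier A,
  an arity function ar on an arbitrary set of operation symbols 'f, and interpretations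
  F f :: 'a list => 'a (meaningful on lists of length ar f), closed on A.\<close>

datatype 'f trm = Var nat | Fn 'f "'f trm list"

fun eval :: "('f \<Rightarrow> 'a list \<Rightarrow> 'a) \<Rightarrow> (nat \<Rightarrow> 'a) \<Rightarrow> 'f trm \<Rightarrow> 'a" where
  "eval F v (Var i) = v i"
| "eval F v (Fn f ts) = F f (map (eval F v) ts)"

fun wf_trm :: "('f \<Rightarrow> nat) \<Rightarrow> nat \<Rightarrow> 'f trm \<Rightarrow> bool" where
  "wf_trm ar n (Var i) = (i < n)"
| "wf_trm ar n (Fn f ts) = (length ts = ar f \<and> (\<forall>t\<in>set ts. wf_trm ar n t))"

definition algebra :: "'a set \<Rightarrow> ('f \<Rightarrow> nat) \<Rightarrow> ('f \<Rightarrow> 'a list \<Rightarrow> 'a) \<Rightarrow> bool" where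
  "algebra A ar F \<longleftrightarrow> A \<noteq> {} \<and>
     (\<forall>f xs. length xs = ar f \<and> set xs \<subseteq> A \<longrightarrow> F f xs \<in> A)"

definition term_op :: "('f \<Rightarrow> 'a list \<Rightarrow> 'a) \<Rightarrow> 'f trm \<Rightarrow> 'a list \<Rightarrow> 'a" where
  "term_op F t xs = eval F (\<lambda>i. xs ! i) t"

definition has_minority_term :: "'a set \<Rightarrow> ('f \<Rightarrow> nat) \<Rightarrow> ('f \<Rightarrow> 'a list \<Rightarrow> 'a) \<Rightarrow> bool" where
  "has_minority_term A ar F \<longleftrightarrow> (\<exists>m. wf_trm ar 3 m \<and>
     (\<forall>x\<in>A. \<forall>y\<in>A.
        term_op F m [y,x,x] = y \<and> term_op F m [x,y,x] = y \<and> term_op F m [x,x,y] = y))"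

definition has_maltsev_term :: "'a set \<Rightarrow> ('f \<Rightarrow> nat) \<Rightarrow> ('f \<Rightarrow> 'a list \<Rightarrow> 'a) \<Rightarrow> bool" where
  "has_maltsev_term A ar F \<longleftrightarrow> (\<exists>p. wf_trm ar 3 p \<and>
     (\<forall>x\<in>A. \<forall>y\<in>A. term_op F p [x,x,y] = y \<and> term_op F p [y,x,x] = y))"

definition has_minority_majority_term :: "'a set \<Rightarrow> ('f \<Rightarrow> nat) \<Rightarrow> ('f \<Rightarrow> 'a list \<Rightarrow> 'a) \<Rightarrow> bool" where
  "has_minority_majority_term A ar F \<longleftrightarrow> (\<exists>t. wf_trm ar 6 t \<and>
     (\<forall>x\<in>A. \<forall>y\<in>A. \<forall>z\<in>A.
        term_op F t [y,x,x,z,y,y] = y \<and> term_op F t [x,y,x,y,z,y] = y \<and>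
        term_op F t [x,x,y,y,y,z] = y))"

end

theory Submission
  imports Defs
begin

fun subst :: "(nat \<Rightarrow> 'f trm) \<Rightarrow> 'f trm \<Rightarrow> 'f trm" where
  "subst s (Var i) = s i"
| "subst s (Fn f ts) = Fn f (map (subst s) ts)"

lemma eval_subst: "eval F v (subst s t) = eval F (\<lambda>i. eval F v (s i)) t"
  by (induction t) (auto cong: map_cong)

lemma wf_subst: "wf_trm ar n t \<Longrightarrow> (\<forall>i<n. wf_trm ar k (s i)) \<Longrightarrow> wf_trm ar k (subst s t)"
  by (induction t) auto

lemma wf_mono: "wf_trm ar n t \<Longrightarrow> n \<le> k \<Longrightarrow> wf_trm ar k t"
  by (induction t) auto

lemma eval_cong: "wf_trm ar n t \<Longrightarrow> (\<forall>i<n. v i = w i) \<Longrightarrow> eval F v t = eval F w t"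
  by (induction t) (auto intro!: arg_cong[where f="F _"] map_cong)

lemma eval_in: "algebra A ar F \<Longrightarrow> wf_trm ar n t \<Longrightarrow> (\<forall>i<n. v i \<in> A) \<Longrightarrow> eval F v t \<in> A"
proof (induction t)
  case (Var x) then show ?case by auto
next
  case (Fn f ts)
  have "set (map (eval F v) ts) \<subseteq> A" using Fn by auto
  moreover have "length (map (eval F v) ts) = ar f" using Fn by auto
  ultimately show ?case using Fn.prems(1) unfolding algebra_def by simp
qed

theorem theorem3p1:
  fixes A :: "'a set" and ar :: "'f \<Rightarrow> nat" and F :: "'f \<Rightarrow> 'a list \<Rightarrow> 'a"
  assumes "algebra A ar F"
  shows "has_minority_term A ar F \<longleftrightarrow>
           has_maltsev_term A ar F \<and> has_minority_majority_term A ar F"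
proof
  assume "has_minority_term A ar F"
  then obtain m where wm: "wf_trm ar 3 m" and hm: "\<forall>x\<in>A. \<forall>y\<in>A.
        term_op F m [y,x,x] = y \<and> term_op F m [x,y,x] = y \<and> term_op F m [x,x,y] = y"
    unfolding has_minority_term_def by blast
  have "has_maltsev_term A ar F"
    unfolding has_maltsev_term_def using wm hm by blast
  moreover have "has_minority_majority_term A ar F"
    unfolding has_minority_majority_term_def
  proof (intro exI conjI ballI)
    show "wf_trm ar 6 m" using wm wf_mono by fastforce
    fix x y z assume xy: "x \<in> A" "y \<in> A" "z \<in> A"
    have c: "term_op F m (a#b#c#rest) = term_op F m [a,b,c]" for a b c rest
      unfolding term_op_def
      by (rule eval_cong[OF wm]) (auto simp: less_Suc_eq numeral_3_eq_3)
    show "term_op F m [y,x,x,z,y,y] = y" using c[of y x x "[z,y,y]"] hm xy by simp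
    show "term_op F m [x,y,x,y,z,y] = y" using c[of x y x "[y,z,y]"] hm xy by simp
    show "term_op F m [x,x,y,y,y,z] = y" using c[of x x y "[y,y,z]"] hm xy by simp
  qed
  ultimately show "has_maltsev_term A ar F \<and> has_minority_majority_term A ar F" ..
next
  assume "has_maltsev_term A ar F \<and> has_minority_majority_term A ar F"
  then obtain p t where wp: "wf_trm ar 3 p" and hp: "\<forall>x\<in>A. \<forall>y\<in>A.
      term_op F p [x,x,y] = y \<and> term_op F p [y,x,x] = y"
    and wt: "wf_trm ar 6 t" and ht: "\<forall>x\<in>A. \<forall>y\<in>A. \<forall>z\<in>A.
        term_op F t [y,x,x,z,y,y] = y \<and> term_op F t [x,y,x,y,z,y] = y \<and>
        term_op F t [x,x,y,y,y,z] = y"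
    unfolding has_maltsev_term_def has_minority_majority_term_def by blast
  define P where "P a b c = subst (\<lambda>i. [Var a, Var b, Var c] ! i) p" for a b c :: nat
  define s where "s = (\<lambda>i. [Var 0, Var 1, Var 2, P 1 0 2, P 0 1 2, P 0 2 1] ! i)"
  define m where "m = subst s t"
  have i3: "i < 3 \<longleftrightarrow> i = 0 \<or> i = 1 \<or> i = 2" for i :: nat by auto
  have i6: "i < 6 \<longleftrightarrow> i = 0 \<or> i = 1 \<or> i = 2 \<or> i = 3 \<or> i = 4 \<or> i = 5" for i :: nat by auto
  have wP: "a < 3 \<Longrightarrow> b < 3 \<Longrightarrow> c < 3 \<Longrightarrow> wf_trm ar 3 (P a b c)" for a b c
    unfolding P_def by (rule wf_subst[OF wp]) (auto simp: i3)
  have wm: "wf_trm ar 3 m"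
    unfolding m_def by (rule wf_subst[OF wt]) (auto simp: i6 s_def wP)
  have Pev: "eval F (\<lambda>i. xs ! i) (P a b c) = term_op F p [xs!a, xs!b, xs!c]" for xs a b c
    unfolding P_def term_op_def eval_subst
    by (rule eval_cong[OF wp]) (auto simp: i3)
  have pA: "a \<in> A \<Longrightarrow> b \<in> A \<Longrightarrow> c \<in> A \<Longrightarrow> term_op F p [a,b,c] \<in> A" for a b c
    unfolding term_op_def by (rule eval_in[OF assms wp]) (auto simp: i3)
  have key: "term_op F m [a,b,c] = term_op F t [a,b,c, term_op F p [b,a,c],
      term_op F p [a,b,c], term_op F p [a,c,b]]" for a b c
    unfolding m_def term_op_def eval_subst
    by (rule eval_cong[OF wt]) (auto simp: i6 s_def Pev[unfolded term_op_def])
  show "has_minority_term A ar F"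
    unfolding has_minority_term_def
  proof (intro exI conjI ballI, rule wm)
    fix x y assume xy: "x \<in> A" "y \<in> A"
    show "term_op F m [y,x,x] = y" using key ht hp xy pA by auto
    show "term_op F m [x,y,x] = y" using key ht hp xy pA by auto
    show "term_op F m [x,x,y] = y" using key ht hp xy pA by auto
  qed
qed

end
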